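(* Let $(\Omega,\mathcal{A},\mathbb{P})$ be a probability space and $k\colon\Omega\times\mathbb{R}\times\mathbb{R}\to\mathbb{R}$ jointly measurable with $|k(\omega,s,t)|\le1$ almost surely, and suppose the mean kernel $K(s,t)=\mathbb{E}_\omega[k(\omega,s,t)]$ is continuous and positive definite ($k(\omega,\cdot,\cdot)$ need not be positive definite). Let $Z=\mathbb{R}^d\times\mathbb{R}\times\mathbb{R}$ and let $\rho$ be a Borel probability measure on $Z$. Let $f\colon\mathbb{R}^d\to\mathbb{R}$ have the representation $$f(x)=\int_Z c(a,b,t)K(\langle a,x\rangle+b,t)\,d\rho(a,b,t)$$ for some $c\in L^2(\rho)$ with $\|c\|_{L^2(\rho)}\le C$. Let $z_i=(a_i,b_i,t_i)$, $i=1,\dots,N$, be i.i.d. with law $\rho$ and $\omega_i$, $i=1,\dots,N$, i.i.d. with law $\mathbb{P}$, all mutually independent, and set $$F_N(x)=\frac1N\sum_{i=1}^N c(z_i)\,k(\omega_i,\langle a_i,x\rangle+b_i,t_i)$$ (using any fixed measurable representative of $c$). Then for every probability measure $\mu$ on $\mathbb{R}^d$, $$\mathbb{E}\|F_N-f\|^2_{L^2(\mu)}\le\frac{C^2}{N},\qquad \mathbb{P}\big(\|F_N-f\|_{L^2(\mu)}>\epsilon\big)\le\frac{C^2}{N\epsilon^2}\quad\text{for all }\epsilon>0.$$ *)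

theory Defs
  imports "HOL-Probability.Probability"
begin

definition pos_def_kernel :: "(real \<Rightarrow> real \<Rightarrow> real) \<Rightarrow> bool" where
  "pos_def_kernel K \<longleftrightarrow> (\<forall>s t. K s t = K t s) \<and>
     (\<forall>(n::nat) (x::nat \<Rightarrow> real) (\<alpha>::nat \<Rightarrow> real).
        0 \<le> (\<Sum>i<n. \<Sum>j<n. \<alpha> i * \<alpha> j * K (x i) (x j)))"

end

theory Submission
  imports Defs
begin
lemma avg_sq_bound:
  fixes M :: "'b measure" and g :: "'b \<Rightarrow> real" and N :: nat
  assumes M: "prob_space M" and g[measurable]: "g \<in> borel_measurable M"
    and g2: "integrable M (\<lambda>w. (g w)\<^sup>2)" and N: "N \<ge> 1"
  shows "(\<integral>\<^sup>+\<xi>. ennreal (((1/real N) * (\<Sum>i<N. g (\<xi> i)) - (\<integral>w. g w \<partial>M))\<^sup>2) \<partial>PiM {..<N} (\<lambda>_. M))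
     \<le> ennreal ((\<integral>w. (g w)\<^sup>2 \<partial>M) / real N)"
proof -
  interpret prob_space M by fact
  interpret PS: product_prob_space "\<lambda>_. M" by unfold_locales
  let ?S = "PiM {..<N} (\<lambda>_. M)"
  have gi: "integrable M g" by (rule square_integrable_imp_integrable[OF g g2])
  define m where "m = (\<integral>w. g w \<partial>M)"
  define h where "h w = g w - m" for w
  have hi: "integrable M h" unfolding h_def using gi by simp
  have h2eq: "(\<lambda>w. (h w)\<^sup>2) = (\<lambda>w. (g w)\<^sup>2 - 2 * m * g w + m\<^sup>2)"
    unfolding h_def by (auto simp: power2_diff)
  have h2i: "integrable M (\<lambda>w. (h w)\<^sup>2)" unfolding h2eq using gi g2 by simp
  have hint: "(\<integral>w. h w \<partial>M) = 0" unfolding h_def m_def using gi by (simp add: prob_space)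
  have h2int: "(\<integral>w. (h w)\<^sup>2 \<partial>M) = (\<integral>w. (g w)\<^sup>2 \<partial>M) - m\<^sup>2"
    unfolding h2eq using gi g2 by (simp add: prob_space m_def power2_eq_square)
  have key: "integrable ?S (\<lambda>\<xi>. h (\<xi> i) * h (\<xi> j)) \<and>
     (\<integral>\<xi>. h (\<xi> i) * h (\<xi> j) \<partial>?S) = (if i = j then \<integral>w. (h w)\<^sup>2 \<partial>M else 0)"
    if ij: "i < N" "j < N" for i j
  proof (cases "i = j")
    case True
    define Fl where "Fl l = (\<lambda>w. if l = i then (h w)\<^sup>2 else 1)" for l
    have Fi: "integrable M (Fl l)" for l using h2i by (cases "l = i") (auto simp: Fl_def)
    have eq: "(\<Prod>l<N. Fl l (\<xi> l)) = h (\<xi> i) * h (\<xi> j)" for \<xi>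
      using ij True by (simp add: Fl_def prod.delta power2_eq_square)
    have eq2: "(\<Prod>l<N. integral\<^sup>L M (Fl l)) = (\<integral>w. (h w)\<^sup>2 \<partial>M)"
    proof -
      have "(\<Prod>l<N. integral\<^sup>L M (Fl l)) = (\<Prod>l<N. if l = i then (\<integral>w. (h w)\<^sup>2 \<partial>M) else 1)"
        by (intro prod.cong) (auto simp: Fl_def prob_space)
      then show ?thesis using ij by (simp add: prod.delta)
    qed
    show ?thesis
      using PS.product_integrable_prod[of "{..<N}" Fl] PS.product_integral_prod[of "{..<N}" Fl] Fi eq eq2 True
      by simp
  next
    case False
    define Fl where "Fl l = (\<lambda>w. if l = i then h w else if l = j then h w else 1)" for l
    have Fi: "integrable M (Fl l)" for l using hi by (cases "l = i"; cases "l = j") (auto simp: Fl_def)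
    have eq: "(\<Prod>l<N. Fl l (\<xi> l)) = h (\<xi> i) * h (\<xi> j)" for \<xi>
    proof -
      have "(\<Prod>l<N. Fl l (\<xi> l)) = (\<Prod>l<N. (if l = i then h (\<xi> l) else 1) * (if l = j then h (\<xi> l) else 1))"
        using False by (intro prod.cong) (auto simp: Fl_def)
      also have "\<dots> = h (\<xi> i) * h (\<xi> j)" using ij by (simp add: prod.distrib prod.delta)
      finally show ?thesis .
    qed
    have eq2: "(\<Prod>l<N. integral\<^sup>L M (Fl l)) = 0"
    proof -
      have "(\<Prod>l<N. integral\<^sup>L M (Fl l)) = (\<Prod>l<N. (if l = i then 0 else 1) * (if l = j then 0 else 1))"
        using False by (intro prod.cong) (auto simp: Fl_def prob_space hint)
      then show ?thesis using ij by (simp add: prod.distrib prod.delta)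
    qed
    show ?thesis
      using PS.product_integrable_prod[of "{..<N}" Fl] PS.product_integral_prod[of "{..<N}" Fl] Fi eq eq2 False
      by simp
  qed
  have pw: "((1/real N) * (\<Sum>i<N. g (\<xi> i)) - m)\<^sup>2 = (1/real N)\<^sup>2 * (\<Sum>i<N. \<Sum>j<N. h (\<xi> i) * h (\<xi> j))" for \<xi>
  proof -
    have "(1/real N) * (\<Sum>i<N. g (\<xi> i)) - m = (1/real N) * (\<Sum>i<N. h (\<xi> i))"
      using N by (simp add: h_def sum_subtractf field_simps)
    then show ?thesis by (simp add: power_mult_distrib power2_eq_square sum_product)
  qed
  have inner_int: "integrable ?S (\<lambda>\<xi>. \<Sum>j<N. h (\<xi> i) * h (\<xi> j))" if "i < N" for i
    by (intro Bochner_Integration.integrable_sum[where f="\<lambda>(j::nat) (\<xi>::nat \<Rightarrow> 'b). h (\<xi> i) * h (\<xi> j)"]) (use key that in auto)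
  have inner_val: "(\<integral>\<xi>. (\<Sum>j<N. h (\<xi> i) * h (\<xi> j)) \<partial>?S) = (\<Sum>j<N. (\<integral>\<xi>. h (\<xi> i) * h (\<xi> j) \<partial>?S))" if "i < N" for i
    by (rule Bochner_Integration.integral_sum[where f="\<lambda>(j::nat) (\<xi>::nat \<Rightarrow> 'b). h (\<xi> i) * h (\<xi> j)"]) (use key that in auto)
  have outer_int: "integrable ?S (\<lambda>\<xi>. (\<Sum>i<N. \<Sum>j<N. h (\<xi> i) * h (\<xi> j)))"
    by (rule Bochner_Integration.integrable_sum[where f="\<lambda>(i::nat) (\<xi>::nat \<Rightarrow> 'b). \<Sum>j<N. h (\<xi> i) * h (\<xi> j)"]) (use inner_int in auto)
  have outer_val: "(\<integral>\<xi>. (\<Sum>i<N. \<Sum>j<N. h (\<xi> i) * h (\<xi> j)) \<partial>?S) = (\<Sum>i<N. \<Sum>j<N. (\<integral>\<xi>. h (\<xi> i) * h (\<xi> j) \<partial>?S))"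
    by (subst Bochner_Integration.integral_sum[where f="\<lambda>(i::nat) (\<xi>::nat \<Rightarrow> 'b). \<Sum>j<N. h (\<xi> i) * h (\<xi> j)"]) (use inner_int inner_val in auto)
  have int_all: "integrable ?S (\<lambda>\<xi>. (1/real N)\<^sup>2 * (\<Sum>i<N. \<Sum>j<N. h (\<xi> i) * h (\<xi> j)))"
    using outer_int by simp
  have val: "(\<integral>\<xi>. (1/real N)\<^sup>2 * (\<Sum>i<N. \<Sum>j<N. h (\<xi> i) * h (\<xi> j)) \<partial>?S) = (\<integral>w. (h w)\<^sup>2 \<partial>M) / real N"
  proof -
    have "(\<integral>\<xi>. (1/real N)\<^sup>2 * (\<Sum>i<N. \<Sum>j<N. h (\<xi> i) * h (\<xi> j)) \<partial>?S)
       = (1/real N)\<^sup>2 * (\<Sum>i<N. \<Sum>j<N. (\<integral>\<xi>. h (\<xi> i) * h (\<xi> j) \<partial>?S))"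
      by (simp only: integral_mult_right_zero outer_val)
    also have "\<dots> = (1/real N)\<^sup>2 * (\<Sum>i<N. \<Sum>j<N. (if i = j then \<integral>w. (h w)\<^sup>2 \<partial>M else 0))"
      using key by (intro arg_cong[where f="\<lambda>x. _ * x"] sum.cong) auto
    also have "\<dots> = (\<integral>w. (h w)\<^sup>2 \<partial>M) / real N"
      using N by (simp add: power2_eq_square field_simps)
    finally show ?thesis .
  qed
  have "(\<integral>\<^sup>+\<xi>. ennreal (((1/real N) * (\<Sum>i<N. g (\<xi> i)) - m)\<^sup>2) \<partial>?S)
      = ennreal (\<integral>\<xi>. (1/real N)\<^sup>2 * (\<Sum>i<N. \<Sum>j<N. h (\<xi> i) * h (\<xi> j)) \<partial>?S)"
    unfolding pw
    by (rule nn_integral_eq_integral[OF int_all]) (auto simp flip: pw)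
  also have "\<dots> \<le> ennreal ((\<integral>w. (g w)\<^sup>2 \<partial>M) / real N)"
    unfolding val h2int using N by (intro ennreal_leI divide_right_mono) auto
  finally show ?thesis unfolding m_def .
qed

theorem theorem9:
  fixes P :: "'w measure"
    and k :: "'w \<Rightarrow> real \<Rightarrow> real \<Rightarrow> real"
    and \<rho> :: "('a::euclidean_space \<times> real \<times> real) measure"
    and c :: "'a \<times> real \<times> real \<Rightarrow> real"
    and f :: "'a \<Rightarrow> real"
    and \<mu> :: "'a measure"
    and C :: real and N :: nat
  assumes P: "prob_space P"
    and k_meas: "(\<lambda>(\<omega>, s, t). k \<omega> s t) \<in> borel_measurable (P \<Otimes>\<^sub>M borel \<Otimes>\<^sub>M borel)"
    and k_bound: "AE \<omega> in P. \<forall>s t. \<bar>k \<omega> s t\<bar> \<le> 1"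
    and K_cont: "continuous_on UNIV (\<lambda>(s, t). \<integral>\<omega>. k \<omega> s t \<partial>P)"
    and K_pd: "pos_def_kernel (\<lambda>s t. \<integral>\<omega>. k \<omega> s t \<partial>P)"
    and \<rho>: "prob_space \<rho>" "sets \<rho> = sets borel"
    and c_meas: "c \<in> borel_measurable \<rho>"
    and c_L2: "integrable \<rho> (\<lambda>z. (c z)\<^sup>2)"
    and c_norm: "sqrt (\<integral>z. (c z)\<^sup>2 \<partial>\<rho>) \<le> C"
    and f_rep: "\<And>x. f x = (\<integral>z. c z * (\<integral>\<omega>. k \<omega> (fst z \<bullet> x + fst (snd z)) (snd (snd z)) \<partial>P) \<partial>\<rho>)"
    and N: "N \<ge> 1"
    and \<mu>: "prob_space \<mu>" "sets \<mu> = sets borel"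
  defines "S \<equiv> PiM {..<N} (\<lambda>_. \<rho> \<Otimes>\<^sub>M P)"
    and "F \<equiv> (\<lambda>\<xi> x. (1 / real N) * (\<Sum>i<N. c (fst (\<xi> i)) *
              k (snd (\<xi> i)) (fst (fst (\<xi> i)) \<bullet> x + fst (snd (fst (\<xi> i)))) (snd (snd (fst (\<xi> i))))))"
  shows "(\<integral>\<^sup>+ \<xi>. (\<integral>\<^sup>+ x. ennreal ((F \<xi> x - f x)\<^sup>2) \<partial>\<mu>) \<partial>S) \<le> ennreal (C\<^sup>2 / real N) \<and>
         (\<forall>\<epsilon>>0.
           {\<xi> \<in> space S. sqrt (enn2real (\<integral>\<^sup>+ x. ennreal ((F \<xi> x - f x)\<^sup>2) \<partial>\<mu>)) > \<epsilon>
                \<or> (\<integral>\<^sup>+ x. ennreal ((F \<xi> x - f x)\<^sup>2) \<partial>\<mu>) = \<infinity>} \<in> sets S \<and>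
           measure S {\<xi> \<in> space S. sqrt (enn2real (\<integral>\<^sup>+ x. ennreal ((F \<xi> x - f x)\<^sup>2) \<partial>\<mu>)) > \<epsilon>
                \<or> (\<integral>\<^sup>+ x. ennreal ((F \<xi> x - f x)\<^sup>2) \<partial>\<mu>) = \<infinity>}
             \<le> C\<^sup>2 / (real N * \<epsilon>\<^sup>2))"
proof -
  interpret P: prob_space P by (rule P)
  interpret R: prob_space \<rho> by (rule \<rho>(1))
  interpret MU: prob_space \<mu> by (rule \<mu>(1))
  interpret RP: pair_prob_space \<rho> P by unfold_locales
  have RPps: "prob_space (\<rho> \<Otimes>\<^sub>M P)" by (rule RP.prob_space_axioms)
  have Sps: "prob_space S" unfolding S_def by (rule prob_space_PiM) (rule RPps)
  interpret SS: prob_space S by (rule Sps)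
  interpret MS: pair_prob_space \<mu> S by unfold_locales
  interpret MRP: pair_prob_space \<mu> "\<rho> \<Otimes>\<^sub>M P" by unfold_locales
  define g where "g x w = c (fst w) * k (snd w) (fst (fst w) \<bullet> x + fst (snd (fst w))) (snd (snd (fst w)))"
    for x :: 'a and w :: "('a \<times> real \<times> real) \<times> 'w"
  have FF: "F \<xi> x = (1/real N) * (\<Sum>i<N. g x (\<xi> i))" for \<xi> x by (simp add: F_def g_def)
  have space_mu: "space \<mu> = UNIV" using sets_eq_imp_space_eq[OF \<mu>(2)] by simp
  have c_b[measurable]: "c \<in> borel_measurable borel"
    using c_meas by (simp add: measurable_cong_sets[OF \<rho>(2) refl])
  have fst_b[measurable]: "fst \<in> borel_measurable (borel :: ('a \<times> real \<times> real) measure)"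
    by (intro borel_measurable_continuous_onI continuous_intros)
  have snd_b[measurable]: "snd \<in> borel_measurable (borel :: ('a \<times> real \<times> real) measure)"
    by (intro borel_measurable_continuous_onI continuous_intros)
  have fst_b2[measurable]: "fst \<in> borel_measurable (borel :: (real \<times> real) measure)"
    by (intro borel_measurable_continuous_onI continuous_intros)
  have snd_b2[measurable]: "snd \<in> borel_measurable (borel :: (real \<times> real) measure)"
    by (intro borel_measurable_continuous_onI continuous_intros)
  have z_meas[measurable]: "(\<lambda>p. fst (snd p)) \<in> measurable (\<mu> \<Otimes>\<^sub>M (\<rho> \<Otimes>\<^sub>M P)) borel"
  proof -
    have "(\<lambda>p. fst (snd p)) \<in> measurable (\<mu> \<Otimes>\<^sub>M (\<rho> \<Otimes>\<^sub>M P)) \<rho>" by measurable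
    then show ?thesis by (simp add: measurable_cong_sets[OF refl \<rho>(2)])
  qed
  have x_meas[measurable]: "(\<lambda>p. fst p) \<in> measurable (\<mu> \<Otimes>\<^sub>M (\<rho> \<Otimes>\<^sub>M P)) borel"
  proof -
    have "(\<lambda>p. fst p) \<in> measurable (\<mu> \<Otimes>\<^sub>M (\<rho> \<Otimes>\<^sub>M P)) \<mu>" by measurable
    then show ?thesis by (simp add: measurable_cong_sets[OF refl \<mu>(2)])
  qed
  have k_m[measurable]: "(\<lambda>(\<omega>, s, t). k \<omega> s t) \<in> borel_measurable (P \<Otimes>\<^sub>M (borel \<Otimes>\<^sub>M borel))"
    using k_meas by simp
  have Phi: "(\<lambda>p. (snd (snd p), fst (fst (snd p)) \<bullet> fst p + fst (snd (fst (snd p))), snd (snd (fst (snd p)))))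
     \<in> measurable (\<mu> \<Otimes>\<^sub>M (\<rho> \<Otimes>\<^sub>M P)) (P \<Otimes>\<^sub>M (borel \<Otimes>\<^sub>M borel))"
    by measurable
  have gm: "(\<lambda>(x, w). g x w) \<in> borel_measurable (\<mu> \<Otimes>\<^sub>M (\<rho> \<Otimes>\<^sub>M P))"
  proof -
    have K1: "(\<lambda>p. (\<lambda>(\<omega>, s, t). k \<omega> s t) (snd (snd p), fst (fst (snd p)) \<bullet> fst p + fst (snd (fst (snd p))), snd (snd (fst (snd p)))))
       \<in> borel_measurable (\<mu> \<Otimes>\<^sub>M (\<rho> \<Otimes>\<^sub>M P))"
      by (rule measurable_compose[OF Phi k_m])
    have C1: "(\<lambda>p. c (fst (snd p))) \<in> borel_measurable (\<mu> \<Otimes>\<^sub>M (\<rho> \<Otimes>\<^sub>M P))" by measurable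
    have "(\<lambda>p. c (fst (snd p)) * (\<lambda>(\<omega>, s, t). k \<omega> s t) (snd (snd p), fst (fst (snd p)) \<bullet> fst p + fst (snd (fst (snd p))), snd (snd (fst (snd p)))))
       \<in> borel_measurable (\<mu> \<Otimes>\<^sub>M (\<rho> \<Otimes>\<^sub>M P))" by (rule borel_measurable_times[OF C1 K1])
    then show ?thesis by (simp add: g_def case_prod_beta')
  qed
  have gx_m[measurable]: "g x \<in> borel_measurable (\<rho> \<Otimes>\<^sub>M P)" for x
    using measurable_Pair2[OF gm, of x] by (simp add: space_mu)
  obtain N0 where N0: "{\<omega>\<in>space P. \<not> (\<forall>s t. \<bar>k \<omega> s t\<bar> \<le> 1)} \<subseteq> N0" "emeasure P N0 = 0" "N0 \<in> sets P"
    using k_bound by (auto elim!: AE_E)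
  have AEb: "AE w in \<rho> \<Otimes>\<^sub>M P. \<forall>s t. \<bar>k (snd w) s t\<bar> \<le> 1"
  proof (rule AE_I'[of "space \<rho> \<times> N0"])
    show "space \<rho> \<times> N0 \<in> null_sets (\<rho> \<Otimes>\<^sub>M P)"
      using N0 by (simp add: null_sets_def P.emeasure_pair_measure_Times)
    show "{w \<in> space (\<rho> \<Otimes>\<^sub>M P). \<not> (\<forall>s t. \<bar>k (snd w) s t\<bar> \<le> 1)} \<subseteq> space \<rho> \<times> N0"
      using N0(1) by (fastforce simp: space_pair_measure)
  qed
  have c2_m: "(\<lambda>z. (c z)\<^sup>2) \<in> borel_measurable \<rho>" using c_meas by measurable
  have c2_int: "integrable (\<rho> \<Otimes>\<^sub>M P) (\<lambda>w. (c (fst w))\<^sup>2)"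
    using integrable_distr_eq[OF measurable_fst[of \<rho> P] c2_m] c_L2 by (simp add: P.distr_pair_fst)
  have c2_val: "(\<integral>w. (c (fst w))\<^sup>2 \<partial>(\<rho> \<Otimes>\<^sub>M P)) = (\<integral>z. (c z)\<^sup>2 \<partial>\<rho>)"
    using integral_distr[OF measurable_fst[of \<rho> P] c2_m] by (simp add: P.distr_pair_fst)
  have CC: "(\<integral>z. (c z)\<^sup>2 \<partial>\<rho>) \<le> C\<^sup>2"
  proof -
    have "(\<integral>z. (c z)\<^sup>2 \<partial>\<rho>) = (sqrt (\<integral>z. (c z)\<^sup>2 \<partial>\<rho>))\<^sup>2" by simp
    also have "\<dots> \<le> C\<^sup>2" using c_norm by (intro power_mono) auto
    finally show ?thesis .
  qed
  have g2_bound: "AE w in \<rho> \<Otimes>\<^sub>M P. (g x w)\<^sup>2 \<le> (c (fst w))\<^sup>2" for x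
    using AEb
  proof eventually_elim
    case (elim w)
    let ?kv = "k (snd w) (fst (fst w) \<bullet> x + fst (snd (fst w))) (snd (snd (fst w)))"
    have "?kv\<^sup>2 \<le> 1" using elim abs_le_square_iff[of ?kv 1] by auto
    then have "(c (fst w))\<^sup>2 * ?kv\<^sup>2 \<le> (c (fst w))\<^sup>2 * 1" by (intro mult_left_mono) auto
    then show ?case by (simp add: g_def power_mult_distrib)
  qed
  have g2_int: "integrable (\<rho> \<Otimes>\<^sub>M P) (\<lambda>w. (g x w)\<^sup>2)" for x
    by (rule Bochner_Integration.integrable_bound[OF c2_int]) (use g2_bound[of x] in auto)
  have g_int: "integrable (\<rho> \<Otimes>\<^sub>M P) (g x)" for x
    by (rule RP.square_integrable_imp_integrable[OF gx_m g2_int])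
  have g2_le: "(\<integral>w. (g x w)\<^sup>2 \<partial>(\<rho> \<Otimes>\<^sub>M P)) \<le> C\<^sup>2" for x
  proof -
    have "(\<integral>w. (g x w)\<^sup>2 \<partial>(\<rho> \<Otimes>\<^sub>M P)) \<le> (\<integral>w. (c (fst w))\<^sup>2 \<partial>(\<rho> \<Otimes>\<^sub>M P))"
      by (rule integral_mono_AE[OF g2_int c2_int g2_bound])
    then show ?thesis using c2_val CC by simp
  qed
  have g_val: "(\<integral>w. g x w \<partial>(\<rho> \<Otimes>\<^sub>M P)) = f x" for x
  proof -
    have "(\<integral>w. g x w \<partial>(\<rho> \<Otimes>\<^sub>M P)) = (\<integral>z. (\<integral>\<omega>. g x (z, \<omega>) \<partial>P) \<partial>\<rho>)"
      by (rule RP.integral_fst'[OF g_int, symmetric])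
    also have "\<dots> = f x" unfolding f_rep by (simp add: g_def)
    finally show ?thesis .
  qed
  have pt: "(\<integral>\<^sup>+\<xi>. ennreal ((F \<xi> x - f x)\<^sup>2) \<partial>S) \<le> ennreal (C\<^sup>2 / real N)" for x
  proof -
    have "(\<integral>\<^sup>+\<xi>. ennreal ((F \<xi> x - f x)\<^sup>2) \<partial>S)
        = (\<integral>\<^sup>+\<xi>. ennreal (((1/real N) * (\<Sum>i<N. g x (\<xi> i)) - (\<integral>w. g x w \<partial>(\<rho> \<Otimes>\<^sub>M P)))\<^sup>2) \<partial>S)"
      by (simp add: FF g_val)
    also have "\<dots> \<le> ennreal ((\<integral>w. (g x w)\<^sup>2 \<partial>(\<rho> \<Otimes>\<^sub>M P)) / real N)"
      unfolding S_def by (rule avg_sq_bound[OF RPps gx_m g2_int N])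
    also have "\<dots> \<le> ennreal (C\<^sup>2 / real N)"
      using g2_le[of x] by (intro ennreal_leI divide_right_mono) auto
    finally show ?thesis .
  qed
  interpret SM: pair_prob_space S \<mu> by unfold_locales
  have f_eq: "f = (\<lambda>x. \<integral>w. g x w \<partial>(\<rho> \<Otimes>\<^sub>M P))" using g_val by auto
  have f_m: "f \<in> borel_measurable \<mu>"
    unfolding f_eq by (rule RP.borel_measurable_lebesgue_integral) (use gm in simp)
  have gi_m: "(\<lambda>p. g (snd p) (fst p i)) \<in> borel_measurable (S \<Otimes>\<^sub>M \<mu>)" if "i < N" for i
  proof -
    have "(\<lambda>p. (snd p, fst p i)) \<in> measurable (S \<Otimes>\<^sub>M \<mu>) (\<mu> \<Otimes>\<^sub>M (\<rho> \<Otimes>\<^sub>M P))"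
    proof -
      have [simp]: "i \<in> {..<N}" using that by simp
      have "(\<lambda>p. fst p i) \<in> measurable (S \<Otimes>\<^sub>M \<mu>) (\<rho> \<Otimes>\<^sub>M P)"
        unfolding S_def by (rule measurable_compose[OF measurable_fst measurable_component_singleton]) (use that in simp)
      then show ?thesis by (intro measurable_Pair measurable_snd)
    qed
    from measurable_compose[OF this gm] show ?thesis by simp
  qed
  have Fm: "(\<lambda>p. F (fst p) (snd p)) \<in> borel_measurable (S \<Otimes>\<^sub>M \<mu>)"
  proof -
    have "(\<lambda>p. \<Sum>i<N. g (snd p) (fst p i)) \<in> borel_measurable (S \<Otimes>\<^sub>M \<mu>)"
      by (rule borel_measurable_sum) (use gi_m in auto)
    then show ?thesis unfolding FF by simp
  qed
  have fm2: "(\<lambda>p. f (snd p)) \<in> borel_measurable (S \<Otimes>\<^sub>M \<mu>)"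
    using f_m by measurable
  have Hm: "(\<lambda>(\<xi>, x). ennreal ((F \<xi> x - f x)\<^sup>2)) \<in> borel_measurable (S \<Otimes>\<^sub>M \<mu>)"
  proof -
    have "(\<lambda>p. ennreal ((F (fst p) (snd p) - f (snd p))\<^sup>2)) \<in> borel_measurable (S \<Otimes>\<^sub>M \<mu>)"
      using Fm fm2 by measurable
    then show ?thesis by (simp add: case_prod_beta')
  qed
  define I where "I \<xi> = (\<integral>\<^sup>+ x. ennreal ((F \<xi> x - f x)\<^sup>2) \<partial>\<mu>)" for \<xi>
  have I_m[measurable]: "I \<in> borel_measurable S"
    unfolding I_def by (rule MU.borel_measurable_nn_integral) (use Hm in simp)
  have part1: "(\<integral>\<^sup>+ \<xi>. I \<xi> \<partial>S) \<le> ennreal (C\<^sup>2 / real N)"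
  proof -
    have "(\<integral>\<^sup>+ \<xi>. I \<xi> \<partial>S) = (\<integral>\<^sup>+ x. (\<integral>\<^sup>+\<xi>. ennreal ((F \<xi> x - f x)\<^sup>2) \<partial>S) \<partial>\<mu>)"
      unfolding I_def by (rule SM.Fubini'[symmetric]) (use Hm in simp)
    also have "\<dots> \<le> (\<integral>\<^sup>+ x. ennreal (C\<^sup>2 / real N) \<partial>\<mu>)"
      by (intro nn_integral_mono pt)
    also have "\<dots> = ennreal (C\<^sup>2 / real N)" by (simp add: MU.emeasure_space_1)
    finally show ?thesis .
  qed
  have part2: "{\<xi> \<in> space S. sqrt (enn2real (I \<xi>)) > \<epsilon> \<or> I \<xi> = \<infinity>} \<in> sets S \<and>
      measure S {\<xi> \<in> space S. sqrt (enn2real (I \<xi>)) > \<epsilon> \<or> I \<xi> = \<infinity>} \<le> C\<^sup>2 / (real N * \<epsilon>\<^sup>2)"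
    if eps: "\<epsilon> > 0" for \<epsilon>
  proof
    define A where "A = {\<xi> \<in> space S. sqrt (enn2real (I \<xi>)) > \<epsilon> \<or> I \<xi> = \<infinity>}"
    show A_sets: "A \<in> sets S" unfolding A_def by measurable
    have ptA: "ennreal (\<epsilon>\<^sup>2) * indicator A \<xi> \<le> I \<xi>" for \<xi>
    proof (cases "\<xi> \<in> A")
      case True
      show ?thesis
      proof (cases "I \<xi> = \<infinity>")
        case False
        then have lt: "sqrt (enn2real (I \<xi>)) > \<epsilon>" using True by (auto simp: A_def)
        have "\<epsilon>\<^sup>2 < (sqrt (enn2real (I \<xi>)))\<^sup>2" using lt eps by (intro power_strict_mono) auto
        then have "\<epsilon>\<^sup>2 \<le> enn2real (I \<xi>)" by simp
        then have "ennreal (\<epsilon>\<^sup>2) \<le> ennreal (enn2real (I \<xi>))" by (rule ennreal_leI)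
        also have "\<dots> = I \<xi>" using False by (simp add: ennreal_enn2real_if)
        finally show ?thesis using True by simp
      qed simp
    qed simp
    have "ennreal (\<epsilon>\<^sup>2) * emeasure S A = (\<integral>\<^sup>+\<xi>. ennreal (\<epsilon>\<^sup>2) * indicator A \<xi> \<partial>S)"
      using A_sets by (simp add: nn_integral_cmult_indicator)
    also have "\<dots> \<le> (\<integral>\<^sup>+ \<xi>. I \<xi> \<partial>S)" by (intro nn_integral_mono ptA)
    also have "\<dots> \<le> ennreal (C\<^sup>2 / real N)" by (rule part1)
    finally have "ennreal (\<epsilon>\<^sup>2 * measure S A) \<le> ennreal (C\<^sup>2 / real N)"
      by (simp add: SS.emeasure_eq_measure ennreal_mult)
    then have "\<epsilon>\<^sup>2 * measure S A \<le> C\<^sup>2 / real N"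
      using N by (subst (asm) ennreal_le_iff) auto
    then show "measure S A \<le> C\<^sup>2 / (real N * \<epsilon>\<^sup>2)"
      using eps N by (simp add: field_simps)
  qed
  show ?thesis using part1 part2 unfolding I_def by blast
qed

end
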